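(* Assume conditions (C1)–(C5). If $\zeta,\tilde\zeta\in\Theta$ satisfy $\limsup_{k\to\infty}\|\zeta_k-\tilde\zeta_k\|>0$, then there exist numbers $\epsilon_0>0$, $\epsilon_1>0$ and infinitely many pairwise disjoint intervals $J_q\subset\mathbb T_0$, $q\in\mathbb N$, each of length at least $\epsilon_1$, such that $\|\varphi_\zeta(t)-\varphi_{\tilde\zeta}(t)\|>\epsilon_0$ for all $t\in\bigcup_qJ_q$ (i.e. the pair $\varphi_\zeta,\varphi_{\tilde\zeta}$ is frequently $(\epsilon_0,\epsilon_1)$-separated).
   Context: Fix integers $m,n\ge1$ and $r\ge0$. Cells are indexed by pairs $(i,j)$, $1\le i\le m$, $1\le j\le n$. The $r$-neighbourhood of $(i,j)$ is $N_r(i,j)=\{(h,l):1\le h\le m,\ 1\le l\le n,\ \max(|h-i|,|l-j|)\le r\}$. Fix constants $a_{ij}>0$, $C^{hl}_{ij}\ge0$, and a continuous function $f:\mathbb R\to\mathbb R$. Vectors of $\mathbb R^{mn}$ are written $v=\{v_{ij}\}$, with norm $\|v\|=\max_{(i,j)}|v_{ij}|$. Time scale: $\{\theta_k\}_{k\in\mathbb Z}$ is strictly increasing, $\theta_{-1}<0<\theta_0$, and there exist $\omega>0$ and $p\in\mathbb N$ with $\theta_{k+2p}=\theta_k+\omega$ for all $k$. Set $\mathbb T_0=\bigcup_{k\in\mathbb Z}[\theta_{2k-1},\theta_{2k}]$, $\delta_k=\theta_{2k+1}-\theta_{2k}$, $\eta_k=\theta_{2k}-\theta_{2k-1}$ (both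 $p$-periodic in $k$), $\delta=\max_{1\le k\le p}\delta_k$. On $\mathbb T_0'=\mathbb T_0\setminus\{\theta_{2k-1}:k\in\mathbb Z\}$ define $\psi(t)=t-\sum_{0<\theta_{2k}<t}\delta_k$ for $t\ge0$ and $\psi(t)=t+\sum_{t\le\theta_{2k}<0}\delta_k$ for $t<0$; put $s_k=\psi(\theta_{2k})$, so $s_k-s_{k-1}=\eta_k$, and write $\psi(\omega):=\omega-\sum_{k=1}^p\delta_k=\sum_{k=1}^p\eta_k$. Inputs: $\Lambda\subset\mathbb R^{mn}$ is compact and $F:\Lambda\to\Lambda$ is continuous. $\Theta$ is the set of all sequences $\zeta=\{\zeta_k\}_{k\in\mathbb Z}$, $\zeta_k=\{\zeta^{ij}_k\}\in\Lambda$, with $\zeta_{k+1}=F(\zeta_k)$ for all $k\in\mathbb Z$. For $\zeta\in\Theta$, $L_{ij}(t,\zeta)=\zeta^{ij}_k$ for $t\in[\theta_{2k-1},\theta_{2k}]$. Network $(N_\zeta)$ on $\mathbb T_0$: $x^\Delta_{ij}(t)=-a_{ij}x_{ij}(t)-\sum_{(h,l)\in N_r(i,j)}C^{hl}_{ij}f(x_{hl}(t))x_{ij}(t)+L_{ij}(t,\zeta)$, $t\in\mathbb T_0$, where the $\Delta$-derivative at $\theta_{2k}$ is $(x(\theta_{2k+1})-x(\theta_{2k}))/\delta_k$ and elsewhere the ordinary derivative. Concretely, a solution on $\mathbb T_0$ is a function continuous and (one-sidedly at endpoints) differentiable on each $[\theta_{2k-1},\theta_{2k}]$ satisfying there $x_{ij}'=-a_{ij}x_{ij}-\sum_{(h,l)\in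 N_r(i,j)}C^{hl}_{ij}f(x_{hl})x_{ij}+\zeta^{ij}_k$, together with $x_{ij}(\theta_{2k+1})=(1-\delta_ka_{ij})x_{ij}(\theta_{2k})-\delta_k\sum_{(h,l)\in N_r(i,j)}C^{hl}_{ij}f(x_{hl}(\theta_{2k}))x_{ij}(\theta_{2k})+\delta_k\zeta^{ij}_k$. Impulsive system $(I_\zeta)$: for $s\in(s_{k-1},s_k)$, $y_{ij}'(s)=-a_{ij}y_{ij}(s)-\sum_{(h,l)\in N_r(i,j)}C^{hl}_{ij}f(y_{hl}(s))y_{ij}(s)+\zeta^{ij}_k$, and at $s=s_k$, $y_{ij}(s_k+)-y_{ij}(s_k)=-\delta_ka_{ij}y_{ij}(s_k)-\delta_k\sum_{(h,l)\in N_r(i,j)}C^{hl}_{ij}f(y_{hl}(s_k))y_{ij}(s_k)+\delta_k\zeta^{ij}_k$. Solutions are left-continuous, continuous except for discontinuities of the first kind at the $s_k$. Let $u_{ij}(s,\tau)=e^{-a_{ij}(s-\tau)}\prod_{\nu=l}^{k}(1-\delta_\nu a_{ij})$ if $s_{l-1}<\tau\le s_l$, $s_k<s\le s_{k+1}$, $k\ge l$, and $u_{ij}(s,\tau)=e^{-a_{ij}(s-\tau)}$ if $s_k<\tau\le s\le s_{k+1}$. Let $\lambda_{ij}=a_{ij}-\frac1{\psi(\omega)}\sum_{\nu=0}^{p-1}\ln|1-\delta_\nu a_{ij}|$, $\lambda=\min_{(i,j)}\lambda_{ij}$. Conditions: (C1) $\delta_ka_{ij}\ne1$ for all $i,j,k$;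 (C2) $\lambda>0$; (C3) $\sup_{s\in\mathbb R}|f(s)|\le M_f$ for some $M_f>0$; (C4) $|f(s_1)-f(s_2)|\le L_f|s_1-s_2|$ for all $s_1,s_2$, for some $L_f>0$. Under (C1),(C2) fix positive numbers $K_{ij}$ with $|u_{ij}(s,\tau)|\le K_{ij}e^{-\lambda_{ij}(s-\tau)}$ for $s\ge\tau$. Define $\bar c=\max_{(i,j)}\big(\frac{K_{ij}}{\lambda_{ij}}+\frac{p\delta K_{ij}}{1-e^{-\lambda_{ij}\psi(\omega)}}\big)\sum_{(h,l)\in N_r(i,j)}C^{hl}_{ij}$, $M_F=\max_{\eta\in\Lambda}\|F(\eta)\|$, $H_0=\frac{M_F}{1-M_f\bar c}\max_{(i,j)}\big(\frac{K_{ij}}{\lambda_{ij}}+\frac{p\delta K_{ij}}{1-e^{-\lambda_{ij}\psi(\omega)}}\big)$. (C5) $(M_f+H_0L_f)\bar c<1$. Under (C1)–(C5), for $\zeta\in\Theta$ the system $(I_\zeta)$ has a unique solution $\phi_\zeta$ on $\mathbb R$ with $\sup_s\|\phi_\zeta(s)\|\le H_0$; define $\varphi_\zeta:\mathbb T_0\to\mathbb R^{mn}$ by $\varphi_\zeta(t)=\phi_\zeta(\psi(t))$ for $t\in\mathbb T_0'$ and $\varphi_\zeta(\theta_{2k+1})=\phi_\zeta(s_k+)$. Then $\varphi_\zeta$ is the unique solution of $(N_\zeta)$ on $\mathbb T_0$ with $\sup_{t\in\mathbb T_0}\|\varphi_\zeta(t)\|\le H_0$. *)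

theory Defs
  imports "HOL-Analysis.Analysis" "HOL-Library.Liminf_Limsup"
begin

(* Vectors of R^{mn} are represented as functions v :: nat => nat => real, component v i j,
   only the cells 1<=i<=m, 1<=j<=n being relevant. *)
type_synonym vec = "nat \<Rightarrow> nat \<Rightarrow> real"

definition cells :: "nat \<Rightarrow> nat \<Rightarrow> (nat \<times> nat) set" where
  "cells m n = {1..m} \<times> {1..n}"

definition vnorm :: "nat \<Rightarrow> nat \<Rightarrow> vec \<Rightarrow> real" where
  "vnorm m n v = Max ((\<lambda>(i,j). \<bar>v i j\<bar>) ` cells m n)"

definition nbhd :: "nat \<Rightarrow> nat \<Rightarrow> nat \<Rightarrow> nat \<Rightarrow> nat \<Rightarrow> (nat \<times> nat) set" where
  "nbhd m n r i j = {(h,l) \<in> cells m n.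
      max \<bar>int h - int i\<bar> \<bar>int l - int j\<bar> \<le> int r}"

definition Theta :: "vec set \<Rightarrow> (vec \<Rightarrow> vec) \<Rightarrow> (int \<Rightarrow> vec) set" where
  "Theta \<Lambda> F = {\<zeta>. (\<forall>k. \<zeta> k \<in> \<Lambda>) \<and> (\<forall>k. \<zeta> (k + 1) = F (\<zeta> k))}"

definition T0 :: "(int \<Rightarrow> real) \<Rightarrow> real set" where
  "T0 \<theta> = (\<Union>k::int. {\<theta> (2*k - 1) .. \<theta> (2*k)})"

definition dlt :: "(int \<Rightarrow> real) \<Rightarrow> int \<Rightarrow> real" where
  "dlt \<theta> k = \<theta> (2*k + 1) - \<theta> (2*k)"

definition eta :: "(int \<Rightarrow> real) \<Rightarrow> int \<Rightarrow> real" where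
  "eta \<theta> k = \<theta> (2*k) - \<theta> (2*k - 1)"

definition dmax :: "(int \<Rightarrow> real) \<Rightarrow> nat \<Rightarrow> real" where
  "dmax \<theta> p = Max (dlt \<theta> ` {1 .. int p})"

definition psi :: "(int \<Rightarrow> real) \<Rightarrow> real \<Rightarrow> real" where
  "psi \<theta> t = (if 0 \<le> t
     then t - (\<Sum>k\<in>{k. 0 < \<theta> (2*k) \<and> \<theta> (2*k) < t}. dlt \<theta> k)
     else t + (\<Sum>k\<in>{k. t \<le> \<theta> (2*k) \<and> \<theta> (2*k) < 0}. dlt \<theta> k))"

definition sseq :: "(int \<Rightarrow> real) \<Rightarrow> int \<Rightarrow> real" where
  "sseq \<theta> k = psi \<theta> (\<theta> (2*k))"

(* psi(omega) = sum of eta_k over one period *)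
definition psi_omega :: "(int \<Rightarrow> real) \<Rightarrow> nat \<Rightarrow> real" where
  "psi_omega \<theta> p = (\<Sum>k\<in>{1 .. int p}. eta \<theta> k)"

definition sidx :: "(int \<Rightarrow> real) \<Rightarrow> real \<Rightarrow> int" where
  "sidx \<theta> t = (THE k. sseq \<theta> (k - 1) < t \<and> t \<le> sseq \<theta> k)"

(* u_{ij}(s,tau) with c = a_{ij}; meaningful for tau <= s.
   If s_{l-1} < tau <= s_l and s_k < s <= s_{k+1} then sidx tau = l, sidx s = k+1,
   and the product runs over nu = l..k (empty when tau, s lie in the same interval). *)
definition u :: "(int \<Rightarrow> real) \<Rightarrow> real \<Rightarrow> real \<Rightarrow> real \<Rightarrow> real" where
  "u \<theta> c s \<tau> = exp (- c * (s - \<tau>)) *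
      (\<Prod>\<nu>\<in>{sidx \<theta> \<tau> .. sidx \<theta> s - 1}. (1 - dlt \<theta> \<nu> * c))"

definition lam :: "(int \<Rightarrow> real) \<Rightarrow> nat \<Rightarrow> real \<Rightarrow> real" where
  "lam \<theta> p c = c - (1 / psi_omega \<theta> p) *
      (\<Sum>\<nu>\<in>{0 .. int p - 1}. ln \<bar>1 - dlt \<theta> \<nu> * c\<bar>)"

definition gain :: "(int \<Rightarrow> real) \<Rightarrow> nat \<Rightarrow> real \<Rightarrow> real \<Rightarrow> real" where
  "gain \<theta> p Kc c = Kc / lam \<theta> p c
      + real p * dmax \<theta> p * Kc / (1 - exp (- lam \<theta> p c * psi_omega \<theta> p))"

definition cbar :: "nat \<Rightarrow> nat \<Rightarrow> nat \<Rightarrow> (int \<Rightarrow> real) \<Rightarrow> nat \<Rightarrow> (nat \<Rightarrow> nat \<Rightarrow> real)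
    \<Rightarrow> (nat \<Rightarrow> nat \<Rightarrow> nat \<Rightarrow> nat \<Rightarrow> real) \<Rightarrow> (nat \<Rightarrow> nat \<Rightarrow> real) \<Rightarrow> real" where
  "cbar m n r \<theta> p a C K = Max ((\<lambda>(i,j). gain \<theta> p (K i j) (a i j) *
      (\<Sum>(h,l)\<in>nbhd m n r i j. C i j h l)) ` cells m n)"

definition MF :: "nat \<Rightarrow> nat \<Rightarrow> vec set \<Rightarrow> (vec \<Rightarrow> vec) \<Rightarrow> real" where
  "MF m n \<Lambda> F = (SUP \<eta>\<in>\<Lambda>. vnorm m n (F \<eta>))"

definition H0 :: "nat \<Rightarrow> nat \<Rightarrow> nat \<Rightarrow> (int \<Rightarrow> real) \<Rightarrow> nat \<Rightarrow> (nat \<Rightarrow> nat \<Rightarrow> real)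
    \<Rightarrow> (nat \<Rightarrow> nat \<Rightarrow> nat \<Rightarrow> nat \<Rightarrow> real) \<Rightarrow> (nat \<Rightarrow> nat \<Rightarrow> real) \<Rightarrow> real
    \<Rightarrow> vec set \<Rightarrow> (vec \<Rightarrow> vec) \<Rightarrow> real" where
  "H0 m n r \<theta> p a C K Mf \<Lambda> F =
     MF m n \<Lambda> F / (1 - Mf * cbar m n r \<theta> p a C K) *
     Max ((\<lambda>(i,j). gain \<theta> p (K i j) (a i j)) ` cells m n)"

definition coup :: "nat \<Rightarrow> nat \<Rightarrow> nat \<Rightarrow> (nat \<Rightarrow> nat \<Rightarrow> nat \<Rightarrow> nat \<Rightarrow> real)
    \<Rightarrow> (real \<Rightarrow> real) \<Rightarrow> vec \<Rightarrow> nat \<Rightarrow> nat \<Rightarrow> real" where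
  "coup m n r C f v i j = (\<Sum>(h,l)\<in>nbhd m n r i j. C i j h l * f (v h l))"

definition is_sol_N :: "nat \<Rightarrow> nat \<Rightarrow> nat \<Rightarrow> (nat \<Rightarrow> nat \<Rightarrow> real)
    \<Rightarrow> (nat \<Rightarrow> nat \<Rightarrow> nat \<Rightarrow> nat \<Rightarrow> real) \<Rightarrow> (real \<Rightarrow> real) \<Rightarrow> (int \<Rightarrow> real)
    \<Rightarrow> (int \<Rightarrow> vec) \<Rightarrow> (real \<Rightarrow> vec) \<Rightarrow> bool" where
  "is_sol_N m n r a C f \<theta> \<zeta> x \<longleftrightarrow>
     (\<forall>k::int. \<forall>(i,j)\<in>cells m n.
        (\<forall>t\<in>{\<theta> (2*k - 1) .. \<theta> (2*k)}.
           ((\<lambda>s. x s i j) has_real_derivative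
              (- a i j * x t i j - coup m n r C f (x t) i j * x t i j + \<zeta> k i j))
           (at t within {\<theta> (2*k - 1) .. \<theta> (2*k)}))
      \<and> x (\<theta> (2*k + 1)) i j =
           (1 - dlt \<theta> k * a i j) * x (\<theta> (2*k)) i j
           - dlt \<theta> k * coup m n r C f (x (\<theta> (2*k))) i j * x (\<theta> (2*k)) i j
           + dlt \<theta> k * \<zeta> k i j)"

end

theory Submission
  imports Defs
begin


lemma finite_cells: "finite (cells m n)" by (simp add: cells_def)

lemma vnorm_ge: "(i,j) \<in> cells m n \<Longrightarrow> \<bar>v i j\<bar> \<le> vnorm m n v"
  unfolding vnorm_def by (rule Max_ge) (auto simp: finite_cells intro!: image_eqI[where x="(i,j)"])

lemma cells_ne: "1 \<le> m \<Longrightarrow> 1 \<le> n \<Longrightarrow> (1,1) \<in> cells m n"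
  by (simp add: cells_def)

lemma vnorm_le: "1 \<le> m \<Longrightarrow> 1 \<le> n \<Longrightarrow> (\<And>i j. (i,j) \<in> cells m n \<Longrightarrow> \<bar>v i j\<bar> \<le> B) \<Longrightarrow> vnorm m n v \<le> B"
  unfolding vnorm_def using cells_ne[of m n]
  by (subst Max_le_iff) (auto simp: finite_cells)

lemma vnorm_gt: "1 \<le> m \<Longrightarrow> 1 \<le> n \<Longrightarrow> c < vnorm m n v \<Longrightarrow> \<exists>i j. (i,j) \<in> cells m n \<and> c < \<bar>v i j\<bar>"
  using vnorm_le[of m n v c] by force

lemma vnorm_nonneg: "1 \<le> m \<Longrightarrow> 1 \<le> n \<Longrightarrow> 0 \<le> vnorm m n v"
  using vnorm_ge[OF cells_ne, of m n v] by (meson abs_ge_zero order_trans)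

lemma deriv_bound:
  fixes g g' :: "real \<Rightarrow> real"
  assumes "\<And>t. t \<in> {a..b} \<Longrightarrow> (g has_real_derivative g' t) (at t within {a..b})"
    and "\<And>t. t \<in> {a..b} \<Longrightarrow> \<bar>g' t\<bar> \<le> B"
    and "x \<in> {a..b}" "y \<in> {a..b}"
  shows "\<bar>g x - g y\<bar> \<le> B * \<bar>x - y\<bar>"
proof -
  have "norm (g x - g y) \<le> B * norm (x - y)"
  proof (rule differentiable_bound[where S="{a..b}" and f'="\<lambda>t h. h * g' t"])
    show "convex {a..b}" by simp
    show "(g has_derivative (\<lambda>h. h * g' t)) (at t within {a..b})" if "t \<in> {a..b}" for t
      using assms(1)[OF that] unfolding has_field_derivative_def by (simp add: mult.commute[of _ "g' t"])
    show "onorm (\<lambda>h. h * g' t) \<le> B" if "t \<in> {a..b}" for t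
    proof -
      have "onorm (\<lambda>h. h * g' t) = \<bar>g' t\<bar>"
        using onorm_scaleR_left[of "\<lambda>h::real. h" "g' t"] by (simp add: onorm_id)
      thus ?thesis using assms(2)[OF that] by simp
    qed
  qed (use assms in auto)
  thus ?thesis by simp
qed

lemma nbhd_sub: "nbhd m n r i j \<subseteq> cells m n" by (auto simp: nbhd_def)
lemma finite_nbhd: "finite (nbhd m n r i j)" using finite_subset[OF nbhd_sub finite_cells] .

lemma coup_bound:
  assumes C: "\<forall>(h,l)\<in>cells m n. 0 \<le> C i j h l" and f: "\<forall>s. \<bar>f s\<bar> \<le> Mf"
  shows "\<bar>coup m n r C f v i j\<bar> \<le> Mf * (\<Sum>(h,l)\<in>nbhd m n r i j. C i j h l)"
proof -
  have "\<bar>coup m n r C f v i j\<bar> \<le> (\<Sum>(h,l)\<in>nbhd m n r i j. \<bar>C i j h l * f (v h l)\<bar>)"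
    unfolding coup_def by (rule order_trans[OF sum_abs]) (simp add: case_prod_beta)
  also have "\<dots> \<le> (\<Sum>(h,l)\<in>nbhd m n r i j. Mf * C i j h l)"
  proof (rule sum_mono)
    fix x assume x: "x \<in> nbhd m n r i j"
    obtain h l where xe: "x = (h,l)" by (cases x)
    have "0 \<le> C i j h l" using C x nbhd_sub xe by blast
    thus "(case x of (h, l) \<Rightarrow> \<bar>C i j h l * f (v h l)\<bar>) \<le> (case x of (h, l) \<Rightarrow> Mf * C i j h l)"
      using mult_left_mono[OF f[rule_format, of "v h l"] \<open>0 \<le> C i j h l\<close>] by (simp add: xe abs_mult mult.commute)
  qed
  also have "\<dots> = Mf * (\<Sum>(h,l)\<in>nbhd m n r i j. C i j h l)"
    by (simp add: sum_distrib_left case_prod_beta)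
  finally show ?thesis .
qed

lemma coup_diff:
  assumes C: "\<forall>(h,l)\<in>cells m n. 0 \<le> C i j h l" and f: "\<forall>s1 s2. \<bar>f s1 - f s2\<bar> \<le> Lf * \<bar>s1 - s2\<bar>"
  shows "\<bar>coup m n r C f v i j - coup m n r C f w i j\<bar> \<le> Lf * (\<Sum>(h,l)\<in>nbhd m n r i j. C i j h l) * vnorm m n (v - w)"
proof -
  have "coup m n r C f v i j - coup m n r C f w i j = (\<Sum>(h,l)\<in>nbhd m n r i j. C i j h l * (f (v h l) - f (w h l)))"
    unfolding coup_def by (simp add: sum_subtractf[symmetric] case_prod_beta right_diff_distrib)
  hence "\<bar>coup m n r C f v i j - coup m n r C f w i j\<bar> \<le> (\<Sum>(h,l)\<in>nbhd m n r i j. \<bar>C i j h l * (f (v h l) - f (w h l))\<bar>)"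
    by (simp only:) (rule order_trans[OF sum_abs], simp add: case_prod_beta)
  also have "\<dots> \<le> (\<Sum>(h,l)\<in>nbhd m n r i j. (Lf * vnorm m n (v - w)) * C i j h l)"
  proof (rule sum_mono)
    fix x assume x: "x \<in> nbhd m n r i j"
    obtain h l where xe: "x = (h,l)" by (cases x)
    have hl: "(h,l) \<in> cells m n" using x nbhd_sub xe by blast
    have c0: "0 \<le> C i j h l" using C hl by blast
    have "\<bar>f (v h l) - f (w h l)\<bar> \<le> Lf * \<bar>v h l - w h l\<bar>" using f by blast
    also have "\<dots> \<le> Lf * vnorm m n (v - w)"
    proof (rule mult_left_mono)
      show "\<bar>v h l - w h l\<bar> \<le> vnorm m n (v - w)" using vnorm_ge[OF hl, of "v - w"] by simp
      show "0 \<le> Lf" using f[rule_format, of 1 0] by simp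
    qed
    finally have "\<bar>f (v h l) - f (w h l)\<bar> \<le> Lf * vnorm m n (v - w)" .
    thus "(case x of (h, l) \<Rightarrow> \<bar>C i j h l * (f (v h l) - f (w h l))\<bar>) \<le> (case x of (h, l) \<Rightarrow> (Lf * vnorm m n (v - w)) * C i j h l)"
      using c0 by (simp add: xe abs_mult mult_left_mono mult.commute)
  qed
  also have "\<dots> = Lf * (\<Sum>(h,l)\<in>nbhd m n r i j. C i j h l) * vnorm m n (v - w)"
    by (simp add: sum_distrib_left case_prod_beta mult_ac)
  finally show ?thesis .
qed

lemma theta_per_nat:
  assumes "\<forall>k. \<theta> (k + 2 * int p) = \<theta> k + \<omega>"
  shows "\<theta> (k + 2 * int p * int j) = \<theta> k + real j * \<omega>"
proof (induction j)
  case 0 then show ?case by simp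
next
  case (Suc j)
  have "\<theta> (k + 2 * int p * int (Suc j)) = \<theta> ((k + 2 * int p * int j) + 2 * int p)"
    by (simp add: algebra_simps)
  also have "\<dots> = \<theta> (k + 2 * int p * int j) + \<omega>" using assms by blast
  also have "\<dots> = \<theta> k + real (Suc j) * \<omega>" using Suc by (simp add: algebra_simps)
  finally show ?case .
qed

lemma eta_per:
  assumes "\<forall>k. \<theta> (k + 2 * int p) = \<theta> k + \<omega>" "1 \<le> p"
  shows "eta \<theta> k = eta \<theta> (k mod int p)"
proof -
  have A: "eta \<theta> (x + int p * int j) = eta \<theta> x" for x j
  proof -
    have "\<theta> (2 * (x + int p * int j)) = \<theta> (2*x) + real j * \<omega>"
      using theta_per_nat[OF assms(1), of "2*x" j] by (simp add: algebra_simps)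
    moreover have "\<theta> (2 * (x + int p * int j) - 1) = \<theta> (2*x - 1) + real j * \<omega>"
      using theta_per_nat[OF assms(1), of "2*x - 1" j] by (simp add: algebra_simps)
    ultimately show ?thesis by (simp add: eta_def)
  qed
  have k: "k = k mod int p + int p * (k div int p)" by simp
  show ?thesis
  proof (cases "0 \<le> k div int p")
    case True
    then obtain j where "k div int p = int j" using nonneg_int_cases by blast
    have "eta \<theta> (k mod int p + int p * int j) = eta \<theta> (k mod int p)" by (rule A)
    thus ?thesis using \<open>k div int p = int j\<close> k by simp
  next
    case False
    hence "k div int p = - int (nat (- (k div int p)))" by simp
    then obtain j where j: "k div int p = - int j" by blast
    have "eta \<theta> (k + int p * int j) = eta \<theta> k" by (rule A)
    moreover have "k + int p * int j = k mod int p" using k j by simp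
    ultimately show ?thesis by simp
  qed
qed

lemma eta_min:
  assumes "\<forall>k. \<theta> (k + 2 * int p) = \<theta> k + \<omega>" "1 \<le> p" "strict_mono \<theta>"
  shows "\<exists>e0>0. \<forall>k. e0 \<le> eta \<theta> k"
proof -
  let ?S = "eta \<theta> ` {0..<int p}"
  have fin: "finite ?S" by simp
  have ne: "?S \<noteq> {}" using assms(2) by auto
  have pos: "0 < eta \<theta> k" for k
    using strict_monoD[OF assms(3), of "2*k-1" "2*k"] by (simp add: eta_def)
  show ?thesis
  proof (intro exI conjI allI)
    show "0 < Min ?S" using fin ne pos by (subst Min_gr_iff) auto
    fix k
    have "k mod int p \<in> {0..<int p}" using assms(2) by simp
    hence "Min ?S \<le> eta \<theta> (k mod int p)" using fin by (intro Min_le) auto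
    thus "Min ?S \<le> eta \<theta> k" using eta_per[OF assms(1,2)] by simp
  qed
qed


lemma cont_coord: "continuous_on (S::vec set) (\<lambda>x. x a b)"
proof -
  have "continuous_on UNIV (\<lambda>x::vec. x a)" by simp
  moreover have "continuous_on UNIV (\<lambda>y::nat\<Rightarrow>real. y b)" by simp
  ultimately have "continuous_on UNIV ((\<lambda>y. y b) \<circ> (\<lambda>x::vec. x a))" by (rule continuous_on_compose[OF _ continuous_on_subset]) auto
  thus ?thesis using continuous_on_subset[of UNIV _ S] by (simp add: o_def)
qed

lemma Lambda_bound:
  assumes "compact (\<Lambda> :: vec set)"
  shows "\<exists>M. \<forall>v\<in>\<Lambda>. \<forall>(i,j)\<in>cells m n. \<bar>v i j\<bar> \<le> M"
proof -
  let ?g = "\<lambda>v::vec. \<Sum>(i,j)\<in>cells m n. \<bar>v i j\<bar>"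
  have "continuous_on \<Lambda> ?g"
    unfolding case_prod_beta
    by (intro continuous_on_sum continuous_on_rabs cont_coord)
  hence "compact (?g ` \<Lambda>)" using assms compact_continuous_image by blast
  hence "bounded (?g ` \<Lambda>)" by (rule compact_imp_bounded)
  then obtain M where M: "\<forall>x\<in>?g ` \<Lambda>. norm x \<le> M" unfolding bounded_iff by blast
  show ?thesis
  proof (intro exI ballI, clarify)
    fix v i j assume v: "v \<in> \<Lambda>" and ij: "(i,j) \<in> cells m n"
    have "\<bar>v i j\<bar> \<le> ?g v"
      using member_le_sum[of "(i,j)" "cells m n" "\<lambda>(i,j). \<bar>v i j\<bar>"] ij finite_cells by auto
    also have "\<dots> \<le> M" using M v by auto
    finally show "\<bar>v i j\<bar> \<le> M" .
  qed
qed



lemma abs_mult_le: "\<bar>x\<bar> \<le> X \<Longrightarrow> \<bar>y\<bar> \<le> Y \<Longrightarrow> \<bar>x * (y::real)\<bar> \<le> X * Y"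
  by (simp add: abs_mult mult_mono')

lemma sol_deriv:
  assumes "is_sol_N m n r a C f \<theta> \<zeta> x" "(i,j) \<in> cells m n" "t \<in> {\<theta> (2*k - 1) .. \<theta> (2*k)}"
  shows "((\<lambda>s. x s i j) has_real_derivative
              (- a i j * x t i j - coup m n r C f (x t) i j * x t i j + \<zeta> k i j))
           (at t within {\<theta> (2*k - 1) .. \<theta> (2*k)})"
  using assms unfolding is_sol_N_def by fast

lemma blocks_disjoint:
  assumes "strict_mono (\<theta>::int \<Rightarrow> real)" "k \<noteq> k'"
  shows "{\<theta> (2*k - 1) .. \<theta> (2*k)} \<inter> {\<theta> (2*k' - 1) .. \<theta> (2*k')} = {}"
proof (cases "k < k'")
  case True
  have "\<theta> (2*k) < \<theta> (2*k' - 1)" using True by (intro strict_monoD[OF assms(1)]) simp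
  thus ?thesis by auto
next
  case False
  hence "k' < k" using assms(2) by simp
  hence "\<theta> (2*k') < \<theta> (2*k - 1)" by (intro strict_monoD[OF assms(1)]) simp
  thus ?thesis by auto
qed

lemma block_T0: "{\<theta> (2*k - 1) .. \<theta> (2*k)} \<subseteq> T0 \<theta>"
  unfolding T0_def by blast




theorem lemma4:
  fixes m n r p :: nat
    and a K :: "nat \<Rightarrow> nat \<Rightarrow> real"
    and C :: "nat \<Rightarrow> nat \<Rightarrow> nat \<Rightarrow> nat \<Rightarrow> real"
    and f :: "real \<Rightarrow> real"
    and \<theta> :: "int \<Rightarrow> real"
    and \<omega> Mf Lf :: real
    and \<Lambda> :: "vec set" and F :: "vec \<Rightarrow> vec"
    and \<zeta> \<zeta>' :: "int \<Rightarrow> vec"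
    and \<phi> \<phi>' :: "real \<Rightarrow> vec"
  assumes mn: "1 \<le> m" "1 \<le> n"
    and a_pos: "\<forall>(i,j)\<in>cells m n. 0 < a i j"
    and C_nonneg: "\<forall>(i,j)\<in>cells m n. \<forall>(h,l)\<in>cells m n. 0 \<le> C i j h l"
    and f_cont: "continuous_on UNIV f"
    and \<theta>_mono: "strict_mono \<theta>"
    and \<theta>_0: "\<theta> (-1) < 0" "0 < \<theta> 0"
    and \<omega>_pos: "0 < \<omega>" and p_pos: "1 \<le> p"
    and \<theta>_per: "\<forall>k. \<theta> (k + 2 * int p) = \<theta> k + \<omega>"
    and \<Lambda>_cpt: "compact \<Lambda>"
    and \<Lambda>_cells: "\<Lambda> \<subseteq> {v. \<forall>i j. (i,j) \<notin> cells m n \<longrightarrow> v i j = 0}"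
    and F_cont: "continuous_on \<Lambda> F" and F_maps: "F ` \<Lambda> \<subseteq> \<Lambda>"
    and C1: "\<forall>(i,j)\<in>cells m n. \<forall>k. dlt \<theta> k * a i j \<noteq> 1"
    and C2: "\<forall>(i,j)\<in>cells m n. 0 < lam \<theta> p (a i j)"
    and C3: "0 < Mf" "\<forall>s. \<bar>f s\<bar> \<le> Mf"
    and C4: "0 < Lf" "\<forall>s1 s2. \<bar>f s1 - f s2\<bar> \<le> Lf * \<bar>s1 - s2\<bar>"
    and K: "\<forall>(i,j)\<in>cells m n. 0 < K i j \<and>
              (\<forall>s \<tau>. \<tau> \<le> s \<longrightarrow>
                 \<bar>u \<theta> (a i j) s \<tau>\<bar> \<le> K i j * exp (- lam \<theta> p (a i j) * (s - \<tau>)))"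
    and C5: "(Mf + H0 m n r \<theta> p a C K Mf \<Lambda> F * Lf) * cbar m n r \<theta> p a C K < 1"
    and \<zeta>_in: "\<zeta> \<in> Theta \<Lambda> F" and \<zeta>'_in: "\<zeta>' \<in> Theta \<Lambda> F"
    and limsup_pos: "limsup (\<lambda>k::nat. ereal (vnorm m n (\<zeta> (int k) - \<zeta>' (int k)))) > 0"
    and \<phi>_sol: "is_sol_N m n r a C f \<theta> \<zeta> \<phi>"
    and \<phi>_bd: "\<forall>t\<in>T0 \<theta>. vnorm m n (\<phi> t) \<le> H0 m n r \<theta> p a C K Mf \<Lambda> F"
    and \<phi>'_sol: "is_sol_N m n r a C f \<theta> \<zeta>' \<phi>'"
    and \<phi>'_bd: "\<forall>t\<in>T0 \<theta>. vnorm m n (\<phi>' t) \<le> H0 m n r \<theta> p a C K Mf \<Lambda> F"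
  shows "\<exists>\<epsilon>0>0. \<exists>\<epsilon>1>0. \<exists>J :: nat \<Rightarrow> real set.
           (\<forall>q. is_interval (J q) \<and> bounded (J q) \<and> J q \<noteq> {} \<and> J q \<subseteq> T0 \<theta>
                 \<and> \<epsilon>1 \<le> Sup (J q) - Inf (J q))
         \<and> (\<forall>q q'. q \<noteq> q' \<longrightarrow> J q \<inter> J q' = {})
         \<and> (\<forall>t\<in>(\<Union>q. J q). \<epsilon>0 < vnorm m n (\<phi> t - \<phi>' t))"
  proof -
  define H where "H = H0 m n r \<theta> p a C K Mf \<Lambda> F"
  define Sij where "Sij i j = (\<Sum>(h,l)\<in>nbhd m n r i j. C i j h l)" for i j
  define A where "A = (\<Sum>(i,j)\<in>cells m n. a i j)"
  define S where "S = (\<Sum>(i,j)\<in>cells m n. Sij i j)"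
  define B where "B = A + Mf * S + S * Lf * H"
  obtain M where M: "\<forall>v\<in>\<Lambda>. \<forall>(i,j)\<in>cells m n. \<bar>v i j\<bar> \<le> M"
    using Lambda_bound[OF \<Lambda>_cpt] by blast
  define L where "L = 2*A*H + 2*Mf*S*H + 2*\<bar>M\<bar> + 1"
  have c11: "(1,1) \<in> cells m n" using cells_ne[OF mn] .
  have Sij_nn: "0 \<le> Sij i j" if "(i,j) \<in> cells m n" for i j
    unfolding Sij_def using C_nonneg that
    by (intro sum_nonneg) (fastforce dest: subsetD[OF nbhd_sub])
  have a_le: "a i j \<le> A" if "(i,j) \<in> cells m n" for i j
    unfolding A_def using member_le_sum[of "(i,j)" "cells m n" "\<lambda>(i,j). a i j"] that a_pos finite_cells
    by fastforce
  have S_le: "Sij i j \<le> S" if "(i,j) \<in> cells m n" for i j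
    unfolding S_def using member_le_sum[of "(i,j)" "cells m n" "\<lambda>(i,j). Sij i j"] that Sij_nn finite_cells
    by fastforce
  have A_nn: "0 \<le> A" using a_le[OF c11] a_pos c11 by fastforce
  have S_nn: "0 \<le> S" using S_le[OF c11] Sij_nn[OF c11] by linarith
  have H_nn: "0 \<le> H"
  proof -
    have "\<theta> 0 \<in> T0 \<theta>" using block_T0[of \<theta> 0] \<theta>_0 by auto
    thus ?thesis using \<phi>_bd vnorm_nonneg[OF mn, of "\<phi> (\<theta> 0)"] unfolding H_def by fastforce
  qed
  have B_nn: "0 \<le> B" unfolding B_def using A_nn S_nn H_nn C3 C4 by simp
  have L_pos: "0 < L"
  proof -
    have "0 \<le> A * H" "0 \<le> Mf * S * H" using A_nn S_nn H_nn C3 by simp_all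
    thus ?thesis unfolding L_def by linarith
  qed
  have Cij: "\<forall>(h,l)\<in>cells m n. 0 \<le> C i j h l" if "(i,j) \<in> cells m n" for i j
    using C_nonneg that by blast
  have cb: "\<bar>coup m n r C f v i j\<bar> \<le> Mf * S" if "(i,j) \<in> cells m n" for v i j
  proof -
    have "\<bar>coup m n r C f v i j\<bar> \<le> Mf * Sij i j"
      unfolding Sij_def by (rule coup_bound[where m=m and n=n and C=C and i=i and j=j, OF Cij[OF that] C3(2)])
    also have "\<dots> \<le> Mf * S" using S_le[OF that] C3 by simp
    finally show ?thesis .
  qed
  have cd: "\<bar>coup m n r C f v i j - coup m n r C f w i j\<bar> \<le> Lf * S * vnorm m n (v - w)"
    if "(i,j) \<in> cells m n" for v w i j
  proof -
    have "\<bar>coup m n r C f v i j - coup m n r C f w i j\<bar> \<le> Lf * Sij i j * vnorm m n (v - w)"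
      unfolding Sij_def by (rule coup_diff[where m=m and n=n and C=C and i=i and j=j, OF Cij[OF that] C4(2)])
    also have "\<dots> \<le> Lf * S * vnorm m n (v - w)"
      using S_le[OF that] C4 vnorm_nonneg[OF mn, of "v - w"] by (simp add: mult_right_mono)
    finally show ?thesis .
  qed
  have \<zeta>L: "\<zeta> k \<in> \<Lambda>" "\<zeta>' k \<in> \<Lambda>" for k using \<zeta>_in \<zeta>'_in unfolding Theta_def by auto
  have \<zeta>b: "\<bar>\<zeta> k i j\<bar> \<le> \<bar>M\<bar>" "\<bar>\<zeta>' k i j\<bar> \<le> \<bar>M\<bar>" if "(i,j) \<in> cells m n" for k i j
    using M \<zeta>L[of k] that by fastforce+
  have \<phi>b: "\<bar>\<phi> t i j\<bar> \<le> H" "\<bar>\<phi>' t i j\<bar> \<le> H" if "(i,j) \<in> cells m n" "t \<in> T0 \<theta>" for t i j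
    using \<phi>_bd \<phi>'_bd that vnorm_ge[OF that(1)] unfolding H_def by (meson order_trans)+
  define D where "D k t i j = (- a i j * \<phi> t i j - coup m n r C f (\<phi> t) i j * \<phi> t i j + \<zeta> k i j)
      - (- a i j * \<phi>' t i j - coup m n r C f (\<phi>' t) i j * \<phi>' t i j + \<zeta>' k i j)" for k t i j
  have Dderiv: "((\<lambda>s. \<phi> s i j - \<phi>' s i j) has_real_derivative D k t i j) (at t within {\<theta> (2*k - 1) .. \<theta> (2*k)})"
    if "(i,j) \<in> cells m n" "t \<in> {\<theta> (2*k - 1) .. \<theta> (2*k)}" for k t i j
    unfolding D_def by (intro DERIV_diff sol_deriv[OF \<phi>_sol that] sol_deriv[OF \<phi>'_sol that])
  have Dbound: "\<bar>D k t i j\<bar> \<le> L" if ij: "(i,j) \<in> cells m n" and t: "t \<in> T0 \<theta>" for k t i j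
  proof -
    have aa: "\<bar>a i j\<bar> \<le> A" using a_le[OF ij] a_pos ij by fastforce
    have 1: "\<bar>a i j * \<phi> t i j\<bar> \<le> A * H" by (rule abs_mult_le[OF aa \<phi>b(1)[OF ij t]])
    have 2: "\<bar>a i j * \<phi>' t i j\<bar> \<le> A * H" by (rule abs_mult_le[OF aa \<phi>b(2)[OF ij t]])
    have 3: "\<bar>coup m n r C f (\<phi> t) i j * \<phi> t i j\<bar> \<le> Mf * S * H" by (rule abs_mult_le[OF cb[OF ij] \<phi>b(1)[OF ij t]])
    have 4: "\<bar>coup m n r C f (\<phi>' t) i j * \<phi>' t i j\<bar> \<le> Mf * S * H" by (rule abs_mult_le[OF cb[OF ij] \<phi>b(2)[OF ij t]])
    show ?thesis unfolding D_def L_def using 1 2 3 4 \<zeta>b[OF ij, of k] by linarith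
  qed
  have Dclose: "\<bar>D k t i j - (\<zeta> k i j - \<zeta>' k i j)\<bar> \<le> B * vnorm m n (\<phi> t - \<phi>' t)"
    if ij: "(i,j) \<in> cells m n" and t: "t \<in> T0 \<theta>" for k t i j
  proof -
    define V where "V = vnorm m n (\<phi> t - \<phi>' t)"
    define c where "c = coup m n r C f (\<phi> t) i j"
    define c' where "c' = coup m n r C f (\<phi>' t) i j"
    have aa: "\<bar>a i j\<bar> \<le> A" using a_le[OF ij] a_pos ij by fastforce
    have dv: "\<bar>\<phi> t i j - \<phi>' t i j\<bar> \<le> V" unfolding V_def using vnorm_ge[OF ij, of "\<phi> t - \<phi>' t"] by simp
    have 1: "\<bar>a i j * (\<phi> t i j - \<phi>' t i j)\<bar> \<le> A * V" by (rule abs_mult_le[OF aa dv])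
    have 2: "\<bar>c * (\<phi> t i j - \<phi>' t i j)\<bar> \<le> (Mf * S) * V" unfolding c_def by (rule abs_mult_le[OF cb[OF ij] dv])
    have 3: "\<bar>(c - c') * \<phi>' t i j\<bar> \<le> (Lf * S * V) * H" unfolding c_def c'_def V_def
      by (rule abs_mult_le[OF cd[OF ij] \<phi>b(2)[OF ij t]])
    have eq: "D k t i j - (\<zeta> k i j - \<zeta>' k i j) = - (a i j * (\<phi> t i j - \<phi>' t i j)) - (c * (\<phi> t i j - \<phi>' t i j) + (c - c') * \<phi>' t i j)"
      unfolding D_def c_def c'_def by (simp add: algebra_simps)
    have "\<bar>D k t i j - (\<zeta> k i j - \<zeta>' k i j)\<bar> \<le> A * V + (Mf * S) * V + (Lf * S * V) * H"
      unfolding eq using 1 2 3 by linarith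
    also have "\<dots> = B * V" unfolding B_def by (simp add: algebra_simps)
    finally show ?thesis unfolding V_def .
  qed
  obtain z where z: "0 < ereal z" "ereal z < limsup (\<lambda>k::nat. ereal (vnorm m n (\<zeta> (int k) - \<zeta>' (int k))))"
    using ereal_dense2[OF limsup_pos] by blast
  define \<epsilon> where "\<epsilon> = z"
  have \<epsilon>_pos: "0 < \<epsilon>" using z(1) unfolding \<epsilon>_def by simp
  define Sk where "Sk = {k::nat. \<epsilon> < vnorm m n (\<zeta> (int k) - \<zeta>' (int k))}"
  have inf: "infinite Sk"
  proof
    assume fin: "finite Sk"
    hence "\<not> (\<exists>\<^sub>F k in sequentially. \<epsilon> < vnorm m n (\<zeta> (int k) - \<zeta>' (int k)))"
      unfolding Sk_def using frequently_cofinite[of "\<lambda>k. \<epsilon> < vnorm m n (\<zeta> (int k) - \<zeta>' (int k))"]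
      by (simp add: cofinite_eq_sequentially)
    hence "eventually (\<lambda>k. ereal (vnorm m n (\<zeta> (int k) - \<zeta>' (int k))) \<le> ereal z) sequentially"
      unfolding \<epsilon>_def by (simp add: not_frequently not_less)
    hence "limsup (\<lambda>k::nat. ereal (vnorm m n (\<zeta> (int k) - \<zeta>' (int k)))) \<le> ereal z" by (rule Limsup_bounded)
    with z(2) show False by simp
  qed
  obtain \<eta>0 where \<eta>0: "0 < \<eta>0" "\<forall>k. \<eta>0 \<le> eta \<theta> k" using eta_min[OF \<theta>_per p_pos \<theta>_mono] by blast
  define e where "e = \<epsilon> / (2 / \<eta>0 + B)"
  define \<epsilon>0 where "\<epsilon>0 = e / 2"
  define d where "d = \<epsilon>0 / L"
  define \<epsilon>1 where "\<epsilon>1 = min d \<eta>0"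
  have den: "0 < 2 / \<eta>0 + B"
  proof -
    have "0 < 2 / \<eta>0" using \<eta>0(1) by simp
    thus ?thesis using B_nn by linarith
  qed
  have e_pos: "0 < e" unfolding e_def using \<epsilon>_pos den by simp
  have \<epsilon>0_pos: "0 < \<epsilon>0" unfolding \<epsilon>0_def using e_pos by simp
  have d_pos: "0 < d" unfolding d_def using \<epsilon>0_pos L_pos by simp
  have \<epsilon>1_pos: "0 < \<epsilon>1" unfolding \<epsilon>1_def using d_pos \<eta>0 by simp
  have Ld: "L * d = \<epsilon>0" unfolding d_def using L_pos by simp
  have e\<epsilon>: "e * (2 / \<eta>0 + B) = \<epsilon>" unfolding e_def using den by simp
  have key: "\<exists>J. is_interval J \<and> bounded J \<and> J \<noteq> {} \<and> J \<subseteq> {\<theta> (2*k - 1) .. \<theta> (2*k)}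
         \<and> \<epsilon>1 \<le> Sup J - Inf J \<and> (\<forall>t\<in>J. \<epsilon>0 < vnorm m n (\<phi> t - \<phi>' t))"
    if big: "\<epsilon> < vnorm m n (\<zeta> k - \<zeta>' k)" for k
  proof -
    define \<alpha> where "\<alpha> = \<theta> (2*k - 1)"
    define \<beta> where "\<beta> = \<theta> (2*k)"
    have I_T0: "{\<alpha>..\<beta>} \<subseteq> T0 \<theta>" unfolding \<alpha>_def \<beta>_def by (rule block_T0)
    have len: "\<eta>0 \<le> \<beta> - \<alpha>" using \<eta>0(2) unfolding eta_def \<alpha>_def \<beta>_def by blast
    have ab: "\<alpha> < \<beta>" using len \<eta>0(1) by simp
    have "\<exists>t0\<in>{\<alpha>..\<beta>}. e < vnorm m n (\<phi> t0 - \<phi>' t0)"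
    proof (rule ccontr)
      assume "\<not> ?thesis"
      hence small: "\<forall>t\<in>{\<alpha>..\<beta>}. vnorm m n (\<phi> t - \<phi>' t) \<le> e" by (auto simp: not_less)
      obtain i j where ij: "(i,j) \<in> cells m n" and big2: "\<epsilon> < \<bar>\<zeta> k i j - \<zeta>' k i j\<bar>"
        using vnorm_gt[OF mn big] by auto
      define \<Delta> where "\<Delta> = \<zeta> k i j - \<zeta>' k i j"
      define g where "g t = (\<phi> t i j - \<phi>' t i j) - \<Delta> * t" for t
      have gd: "(g has_real_derivative (D k t i j - \<Delta>)) (at t within {\<alpha>..\<beta>})" if "t \<in> {\<alpha>..\<beta>}" for t
      proof -
        have lin: "((\<lambda>t. \<Delta> * t) has_real_derivative \<Delta>) (at t within {\<alpha>..\<beta>})"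
          by (auto intro!: derivative_eq_intros)
        show ?thesis unfolding g_def
          by (rule DERIV_diff[OF Dderiv[OF ij that[unfolded \<alpha>_def \<beta>_def], folded \<alpha>_def \<beta>_def] lin])
      qed
      have gb: "\<bar>D k t i j - \<Delta>\<bar> \<le> B * e" if "t \<in> {\<alpha>..\<beta>}" for t
      proof -
        have "\<bar>D k t i j - \<Delta>\<bar> \<le> B * vnorm m n (\<phi> t - \<phi>' t)"
          unfolding \<Delta>_def using Dclose[OF ij] I_T0 that by blast
        also have "\<dots> \<le> B * e" using small that B_nn by (simp add: mult_left_mono)
        finally show ?thesis .
      qed
      have "\<bar>g \<beta> - g \<alpha>\<bar> \<le> (B * e) * \<bar>\<beta> - \<alpha>\<bar>"
        by (rule deriv_bound[OF gd gb]) (use ab in auto)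
      hence g1: "\<bar>(\<phi> \<beta> i j - \<phi>' \<beta> i j) - (\<phi> \<alpha> i j - \<phi>' \<alpha> i j) - \<Delta> * (\<beta> - \<alpha>)\<bar> \<le> B * e * (\<beta> - \<alpha>)"
        unfolding g_def using ab by (simp add: algebra_simps)
      have wb: "\<bar>\<phi> t i j - \<phi>' t i j\<bar> \<le> e" if "t \<in> {\<alpha>..\<beta>}" for t
        using vnorm_ge[OF ij, of "\<phi> t - \<phi>' t"] small that by fastforce
      have w\<alpha>: "\<bar>\<phi> \<alpha> i j - \<phi>' \<alpha> i j\<bar> \<le> e" using wb ab by simp
      have w\<beta>: "\<bar>\<phi> \<beta> i j - \<phi>' \<beta> i j\<bar> \<le> e" using wb ab by simp
      have "\<bar>\<Delta> * (\<beta> - \<alpha>)\<bar> \<le> 2 * e + B * e * (\<beta> - \<alpha>)" using g1 w\<alpha> w\<beta> by linarith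
      hence h1: "\<bar>\<Delta>\<bar> * (\<beta> - \<alpha>) \<le> 2 * e + B * e * (\<beta> - \<alpha>)" using ab by (simp add: abs_mult)
      have h2: "\<epsilon> * (\<beta> - \<alpha>) < \<bar>\<Delta>\<bar> * (\<beta> - \<alpha>)"
        using big2 ab unfolding \<Delta>_def by (intro mult_strict_right_mono) auto
      have q1: "1 \<le> (\<beta> - \<alpha>) / \<eta>0" using len \<eta>0(1) by simp
      have h3: "2 * e \<le> 2 * e * ((\<beta> - \<alpha>) / \<eta>0)" using mult_left_mono[OF q1, of "2*e"] e_pos by simp
      have h4: "\<epsilon> * (\<beta> - \<alpha>) = 2 * e * ((\<beta> - \<alpha>) / \<eta>0) + B * e * (\<beta> - \<alpha>)"
        unfolding e\<epsilon>[symmetric] using \<eta>0(1) by (simp add: field_simps)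
      show False using h1 h2 h3 h4 by linarith
    qed
    then obtain t0 where t0: "t0 \<in> {\<alpha>..\<beta>}" and t0big: "e < vnorm m n (\<phi> t0 - \<phi>' t0)" by blast
    obtain i j where ij: "(i,j) \<in> cells m n" and wt0: "e < \<bar>\<phi> t0 i j - \<phi>' t0 i j\<bar>"
      using vnorm_gt[OF mn t0big] by auto
    have lip: "\<bar>(\<phi> s i j - \<phi>' s i j) - (\<phi> t0 i j - \<phi>' t0 i j)\<bar> \<le> L * \<bar>s - t0\<bar>" if "s \<in> {\<alpha>..\<beta>}" for s
    proof (rule deriv_bound[where g'="\<lambda>t. D k t i j"])
      show "((\<lambda>s. \<phi> s i j - \<phi>' s i j) has_real_derivative D k t i j) (at t within {\<alpha>..\<beta>})" if "t \<in> {\<alpha>..\<beta>}" for t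
        using Dderiv[OF ij that[unfolded \<alpha>_def \<beta>_def]] unfolding \<alpha>_def \<beta>_def .
      show "\<bar>D k t i j\<bar> \<le> L" if "t \<in> {\<alpha>..\<beta>}" for t using Dbound[OF ij] I_T0 that by blast
    qed (use that t0 in auto)
    define J where "J = {max \<alpha> (t0 - d) .. min \<beta> (t0 + d)}"
    have lohi: "max \<alpha> (t0 - d) \<le> min \<beta> (t0 + d)" using t0 d_pos by auto
    have "\<epsilon>1 \<le> min \<beta> (t0 + d) - max \<alpha> (t0 - d)"
      using t0 d_pos len unfolding \<epsilon>1_def by (auto simp: min_def max_def)
    hence lenJ: "\<epsilon>1 \<le> Sup J - Inf J" unfolding J_def using lohi by simp
    have sepJ: "\<epsilon>0 < vnorm m n (\<phi> s - \<phi>' s)" if s: "s \<in> J" for s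
    proof -
      have sI: "s \<in> {\<alpha>..\<beta>}" using s unfolding J_def by auto
      have "\<bar>s - t0\<bar> \<le> d" using s unfolding J_def by auto
      hence "L * \<bar>s - t0\<bar> \<le> \<epsilon>0" using Ld L_pos by (metis mult_left_mono less_imp_le)
      hence "\<epsilon>0 < \<bar>\<phi> s i j - \<phi>' s i j\<bar>" using lip[OF sI] wt0 unfolding \<epsilon>0_def by linarith
      also have "\<dots> \<le> vnorm m n (\<phi> s - \<phi>' s)" using vnorm_ge[OF ij, of "\<phi> s - \<phi>' s"] by simp
      finally show ?thesis .
    qed
    show ?thesis
    proof (intro exI[of _ J] conjI)
      show "is_interval J" unfolding J_def by (rule is_interval_cc)
      show "bounded J" unfolding J_def by (rule bounded_closed_interval)
      show "J \<noteq> {}" unfolding J_def using lohi by simp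
      show "J \<subseteq> {\<theta> (2*k - 1) .. \<theta> (2*k)}" unfolding J_def \<alpha>_def[symmetric] \<beta>_def[symmetric] by auto
    qed (use lenJ sepJ in auto)
  qed
  define ks where "ks = enumerate Sk"
  have ksS: "ks q \<in> Sk" for q unfolding ks_def by (rule enumerate_in_set[OF inf])
  have ks_mono: "strict_mono ks" unfolding ks_def by (rule strict_mono_enumerate[OF inf])
  have "\<forall>q. \<exists>J. is_interval J \<and> bounded J \<and> J \<noteq> {} \<and> J \<subseteq> {\<theta> (2*int (ks q) - 1) .. \<theta> (2*int (ks q))}
         \<and> \<epsilon>1 \<le> Sup J - Inf J \<and> (\<forall>t\<in>J. \<epsilon>0 < vnorm m n (\<phi> t - \<phi>' t))"
    using key ksS unfolding Sk_def by blast
  then obtain Jf where Jf: "\<forall>q. is_interval (Jf q) \<and> bounded (Jf q) \<and> Jf q \<noteq> {} \<and> Jf q \<subseteq> {\<theta> (2*int (ks q) - 1) .. \<theta> (2*int (ks q))}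
         \<and> \<epsilon>1 \<le> Sup (Jf q) - Inf (Jf q) \<and> (\<forall>t\<in>Jf q. \<epsilon>0 < vnorm m n (\<phi> t - \<phi>' t))"
    using choice[of "\<lambda>q J. is_interval J \<and> bounded J \<and> J \<noteq> {} \<and> J \<subseteq> {\<theta> (2*int (ks q) - 1) .. \<theta> (2*int (ks q))}
         \<and> \<epsilon>1 \<le> Sup J - Inf J \<and> (\<forall>t\<in>J. \<epsilon>0 < vnorm m n (\<phi> t - \<phi>' t))"] by blast
  have P1: "\<forall>q. is_interval (Jf q) \<and> bounded (Jf q) \<and> Jf q \<noteq> {} \<and> Jf q \<subseteq> T0 \<theta> \<and> \<epsilon>1 \<le> Sup (Jf q) - Inf (Jf q)"
  proof
    fix q
    show "is_interval (Jf q) \<and> bounded (Jf q) \<and> Jf q \<noteq> {} \<and> Jf q \<subseteq> T0 \<theta> \<and> \<epsilon>1 \<le> Sup (Jf q) - Inf (Jf q)"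
      using Jf[rule_format, of q] block_T0[of \<theta> "int (ks q)"] by blast
  qed
  have P2: "\<forall>q q'. q \<noteq> q' \<longrightarrow> Jf q \<inter> Jf q' = {}"
  proof (intro allI impI)
    fix q q' :: nat assume "q \<noteq> q'"
    hence "int (ks q) \<noteq> int (ks q')" using strict_mono_eq[OF ks_mono] by simp
    hence "{\<theta> (2*int (ks q) - 1) .. \<theta> (2*int (ks q))} \<inter> {\<theta> (2*int (ks q') - 1) .. \<theta> (2*int (ks q'))} = {}"
      by (rule blocks_disjoint[OF \<theta>_mono])
    thus "Jf q \<inter> Jf q' = {}" using Jf[rule_format, of q] Jf[rule_format, of q'] by blast
  qed
  have P3: "\<forall>t\<in>(\<Union>q. Jf q). \<epsilon>0 < vnorm m n (\<phi> t - \<phi>' t)" using Jf by blast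
  show ?thesis using \<epsilon>0_pos \<epsilon>1_pos P1 P2 P3 by blast
qed

end
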